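(* Let $k\ge 2$ and $n=r+m(k+1)$ with integers $m\ge 0$ and $r\in\{0,1,\ldots,k\}$. Then: (i) if $r=0$, $L_n^{(k)}\equiv 2(-1)^m\pmod{2^{k-2}}$; (ii) if $r=1$, $L_n^{(k)}\equiv (4m+1)(-1)^m\pmod{2^{k-1}}$; (iii) if $r=2$, $L_n^{(k)}\equiv (4m^2+6m+3)(-1)^m\pmod{2^{k}}$; (iv) if $r\ge 3$, $$L_n^{(k)}\equiv (-1)^m2^{r-2}\left(4\left(\binom{m+r+1}{m}-\binom{m+r-1}{m-2}\right)-\left(\binom{m+r}{m}-\binom{m+r-2}{m-2}\right)\right)\pmod{2^{k+r-2}}.$$
   Context: For an integer $k\ge 2$, the $k$-Lucas sequence $\{L_n^{(k)}\}_{n\in\mathbb{Z}}$ is defined by $L_{2-k}^{(k)}=\cdots=L_{-1}^{(k)}=0$, $L_0^{(k)}=2$, $L_1^{(k)}=1$, and $L_n^{(k)}=L_{n-1}^{(k)}+\cdots+L_{n-k}^{(k)}$. Convention: $\binom{a}{b}=0$ if $a<b$ or if $a$ or $b$ is negative. *)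

theory Defs
  imports "HOL-Number_Theory.Number_Theory"
begin

text \<open>The k-Lucas sequence for nonnegative indices. The terms with indices 2-k..-1 are 0,
  so for n >= 2, L n = sum of L (n-j) for 1 <= j <= k with n-j >= 0.\<close>
function klucas :: "nat \<Rightarrow> nat \<Rightarrow> int" where
  "klucas k n = (if n = 0 then 2 else if n = 1 then 1
                 else (\<Sum>j\<in>{1..min k n}. klucas k (n - j)))"
  by pat_completeness auto
termination
  by (relation "measure snd") auto

definition binomZ :: "int \<Rightarrow> int \<Rightarrow> int" where
  "binomZ a b = (if a < 0 \<or> b < 0 \<or> a < b then 0 else int (nat a choose nat b))"

end

theory Submission
  imports Defs
begin

declare klucas.simps[simp del]

function kt :: "nat \<Rightarrow> nat \<Rightarrow> int" where
  "kt k n = (if n = 0 then 1 else (\<Sum>j\<in>{1..min k n}. kt k (n - j)))"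
  by pat_completeness auto
termination
  by (relation "measure snd") auto

declare kt.simps[simp del]

definition tm :: "nat \<Rightarrow> nat \<Rightarrow> int" where
  "tm k n = (if n = 0 then 0 else kt k (n - 1))"

lemma tm_sum:
  assumes "k \<ge> 1" "n \<ge> 2"
  shows "(\<Sum>j\<in>{1..min k n}. tm k (n - j)) = kt k (n - 1)"
proof -
  have kn: "kt k (n - 1) = (\<Sum>j\<in>{1..min k (n - 1)}. kt k (n - 1 - j))"
    using assms by (subst kt.simps) simp
  show ?thesis
  proof (cases "n \<le> k")
    case True
    have "{1..min k n} = insert n {1..min k (n - 1)}" using True assms by auto
    moreover have "n \<notin> {1..min k (n - 1)}" by auto
    ultimately have "(\<Sum>j\<in>{1..min k n}. tm k (n - j)) = (\<Sum>j\<in>{1..min k (n - 1)}. tm k (n - j))"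
      by (simp add: tm_def)
    also have "\<dots> = (\<Sum>j\<in>{1..min k (n - 1)}. kt k (n - 1 - j))"
      by (rule sum.cong) (auto simp: tm_def diff_diff_add)
    finally show ?thesis using kn by simp
  next
    case False
    then have m1: "min k n = k" "min k (n - 1) = k" by auto
    have "(\<Sum>j\<in>{1..min k n}. tm k (n - j)) = (\<Sum>j\<in>{1..min k (n - 1)}. kt k (n - 1 - j))"
      unfolding m1 using False by (intro sum.cong) (auto simp: tm_def diff_diff_add)
    then show ?thesis using kn m1 by simp
  qed
qed

lemma L_T:
  assumes "k \<ge> 1"
  shows "klucas k n = 2 * kt k n - tm k n"
proof (induction n rule: less_induct)
  case (less n)
  show ?case
  proof (cases "n \<le> 1")
    case True
    then consider "n = 0" | "n = 1" by linarith
    then show ?thesis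
    proof cases
      case 1 then show ?thesis by (simp add: klucas.simps kt.simps tm_def)
    next
      case 2 then show ?thesis using assms by (simp add: klucas.simps kt.simps tm_def)
    qed
  next
    case False
    have "klucas k n = (\<Sum>j\<in>{1..min k n}. klucas k (n - j))"
      using False by (subst klucas.simps) simp
    also have "\<dots> = (\<Sum>j\<in>{1..min k n}. 2 * kt k (n - j) - tm k (n - j))"
      using False assms by (intro sum.cong refl less) auto
    also have "\<dots> = 2 * (\<Sum>j\<in>{1..min k n}. kt k (n - j)) - (\<Sum>j\<in>{1..min k n}. tm k (n - j))"
      by (simp add: sum_subtractf sum_distrib_left)
    also have "(\<Sum>j\<in>{1..min k n}. kt k (n - j)) = kt k n"
      using False by (subst (2) kt.simps) simp
    also have "(\<Sum>j\<in>{1..min k n}. tm k (n - j)) = kt k (n - 1)"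
      using False assms by (intro tm_sum) auto
    finally show ?thesis using False by (simp add: tm_def)
  qed
qed

definition ka :: "nat \<Rightarrow> nat \<Rightarrow> int" where
  "ka k N = (\<Sum>i<Suc N. kt k i)"

lemma reidx:
  fixes f :: "nat \<Rightarrow> int"
  shows "p \<le> M \<Longrightarrow> (\<Sum>j\<in>{1..p}. f (M - j)) = (\<Sum>i\<in>{M - p..<M}. f i)"
proof (induction p)
  case 0 then show ?case by simp
next
  case (Suc p)
  have s1: "{1..Suc p} = insert (Suc p) {1..p}" by auto
  have s2: "{M - Suc p..<M} = insert (M - Suc p) {M - p..<M}" using Suc.prems by auto
  show ?case using Suc by (simp add: s1 s2)
qed

lemma ka_rec:
  assumes "k \<ge> 1"
  shows "ka k (Suc N) = 2 * ka k N - (if N \<ge> k then ka k (N - k) else 0)"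
proof -
  have kts: "kt k (Suc N) = (\<Sum>i\<in>{Suc N - min k (Suc N)..<Suc N}. kt k i)"
  proof -
    have "kt k (Suc N) = (\<Sum>j\<in>{1..min k (Suc N)}. kt k (Suc N - j))"
      by (subst kt.simps) simp
    also have "\<dots> = (\<Sum>i\<in>{Suc N - min k (Suc N)..<Suc N}. kt k i)"
      by (rule reidx) simp
    finally show ?thesis .
  qed
  have ka0: "ka k N = (\<Sum>i\<in>{0..<Suc N}. kt k i)" by (simp add: ka_def atLeast0LessThan)
  have "ka k (Suc N) = ka k N + kt k (Suc N)" by (simp add: ka_def)
  moreover have "kt k (Suc N) = ka k N - (if N \<ge> k then ka k (N - k) else 0)"
  proof (cases "N \<ge> k")
    case True
    have "ka k N = (\<Sum>i\<in>{0..<Suc N - k}. kt k i) + (\<Sum>i\<in>{Suc N - k..<Suc N}. kt k i)"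
      unfolding ka0 using True by (subst sum.atLeastLessThan_concat) auto
    moreover have "ka k (N - k) = (\<Sum>i\<in>{0..<Suc N - k}. kt k i)"
      using True by (simp add: ka_def atLeast0LessThan Suc_diff_le)
    ultimately show ?thesis using True kts by (simp add: min_def)
  next
    case False
    then show ?thesis using kts ka0 by (simp add: min_def)
  qed
  ultimately show ?thesis by simp
qed

lemma ka_small:
  assumes "k \<ge> 1" shows "r \<le> k \<Longrightarrow> ka k r = 2 ^ r"
proof (induction r)
  case 0 then show ?case by (simp add: ka_def kt.simps)
next
  case (Suc r) then show ?case using assms by (simp add: ka_rec)
qed

lemma keyK:
  assumes k1: "k \<ge> 1"
  shows "r \<le> k \<Longrightarrow> (2::int) ^ (r + k + 1) dvd (ka k (r + m * (k + 1)) - (-1) ^ m * int ((r + m) choose m) * 2 ^ r)"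
proof (induction m arbitrary: r)
  case 0 then show ?case using ka_small[OF k1] by simp
next
  case (Suc m)
  note IH = Suc.IH
  show ?case using Suc.prems
  proof (induction r)
    case 0
    have N: "0 + Suc m * (k + 1) = Suc (k + m * (k + 1))" by simp
    have e: "ka k (0 + Suc m * (k + 1)) = 2 * ka k (k + m * (k + 1)) - ka k (0 + m * (k + 1))"
      unfolding N using k1 by (simp add: ka_rec)
    obtain t where t: "ka k (k + m * (k + 1)) - (-1) ^ m * int ((k + m) choose m) * 2 ^ k = 2 ^ (k + k + 1) * t"
      using IH[of k] by (auto elim: dvdE)
    obtain u where u: "ka k (0 + m * (k + 1)) - (-1) ^ m * int ((0 + m) choose m) * 2 ^ 0 = 2 ^ (0 + k + 1) * u"
      using IH[of 0] by (auto elim: dvdE)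
    have "ka k (0 + Suc m * (k + 1)) - (-1) ^ Suc m * int ((0 + Suc m) choose Suc m) * 2 ^ 0
        = 2 ^ (0 + k + 1) * ((-1) ^ m * int ((k + m) choose m) + 2 ^ (k + 1) * t - u)"
      using e t u by (simp add: algebra_simps power_add)
    then show ?case by simp
  next
    case (Suc r)
    have rk: "r < k" using Suc.prems by simp
    have N: "Suc r + Suc m * (k + 1) = Suc (r + Suc m * (k + 1))" by simp
    have N2: "r + Suc m * (k + 1) - k = Suc r + m * (k + 1)" by simp
    have e: "ka k (Suc r + Suc m * (k + 1)) = 2 * ka k (r + Suc m * (k + 1)) - ka k (Suc r + m * (k + 1))"
      unfolding N using k1 by (simp add: ka_rec N2)
    obtain t where t: "ka k (r + Suc m * (k + 1)) - (-1) ^ Suc m * int ((r + Suc m) choose Suc m) * 2 ^ r = 2 ^ (r + k + 1) * t"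
      using Suc.IH rk by (auto elim: dvdE)
    obtain u where u: "ka k (Suc r + m * (k + 1)) - (-1) ^ m * int ((Suc r + m) choose m) * 2 ^ Suc r = 2 ^ (Suc r + k + 1) * u"
      using IH[of "Suc r"] Suc.prems by (auto elim: dvdE)
    have b: "int ((Suc r + Suc m) choose Suc m) = int ((r + Suc m) choose Suc m) + int ((Suc r + m) choose m)"
      by simp
    have "ka k (Suc r + Suc m * (k + 1)) - (-1) ^ Suc m * int ((Suc r + Suc m) choose Suc m) * 2 ^ Suc r
        = 2 ^ (Suc r + k + 1) * (t - u)"
      using e t u unfolding b by (simp add: algebra_simps power_add)
    then show ?case by simp
  qed
qed

lemma L_ka:
  assumes "k \<ge> 1" "n \<ge> 2"
  shows "klucas k n = 2 * ka k n - 3 * ka k (n - 1) + ka k (n - 2)"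
proof -
  have kt1: "kt k j = ka k j - ka k (j - 1)" if "j \<ge> 1" for j
    using that by (cases j) (auto simp: ka_def)
  have "klucas k n = 2 * kt k n - kt k (n - 1)"
    using L_T[OF assms(1)] assms by (simp add: tm_def)
  also have "\<dots> = 2 * (ka k n - ka k (n - 1)) - (ka k (n - 1) - ka k (n - 1 - 1))"
    using assms by (simp add: kt1)
  moreover have "n - 1 - 1 = n - 2" by simp
  ultimately show ?thesis by (simp add: algebra_simps)
qed

lemma binomZ_int: "binomZ (int a) (int b) = int (a choose b)"
  by (simp add: binomZ_def)

lemma pascal2:
  "int (Suc (Suc n) choose Suc (Suc j)) - int (n choose j) = 2 * int (Suc n choose Suc (Suc j)) - int (n choose Suc (Suc j))"
  by simp

lemma binom_id:
  assumes "\<rho> \<ge> 1"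
  shows "binomZ (int m + int \<rho> + 1) (int m) - binomZ (int m + int \<rho> - 1) (int m - 2)
       = 2 * int ((\<rho> + m) choose m) - int ((\<rho> - 1 + m) choose m)"
proof -
  consider "m = 0" | "m = 1" | j where "m = j + 2" by (metis add_2_eq_Suc' not0_implies_Suc One_nat_def)
  then show ?thesis
  proof cases
    case 1 then show ?thesis by (simp add: binomZ_def)
  next
    case 2 then show ?thesis using assms by (simp add: binomZ_def)
  next
    case 3
    obtain p where p: "\<rho> = Suc p" using assms by (cases \<rho>) auto
    have a1: "int m + int \<rho> + 1 = int (Suc (Suc (j + p + 2)))" using 3 p by simp
    have a2: "int m + int \<rho> - 1 = int (j + p + 2)" using 3 p by simp
    have a3: "int m - 2 = int j" using 3 by simp
    have a4: "int m = int (Suc (Suc j))" using 3 by simp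
    have b1: "binomZ (int m + int \<rho> + 1) (int m) = int (Suc (Suc (j + p + 2)) choose Suc (Suc j))"
      unfolding a1 by (simp only: a4 binomZ_int)
    have b2: "binomZ (int m + int \<rho> - 1) (int m - 2) = int ((j + p + 2) choose j)"
      unfolding a2 by (simp only: a3 binomZ_int)
    have c1: "\<rho> + m = Suc (j + p + 2)" "\<rho> - 1 + m = j + p + 2" "m = Suc (Suc j)" using 3 p by auto
    show ?thesis unfolding b1 b2 unfolding c1(1) c1(2) unfolding c1(3) by (rule pascal2)
  qed
qed

lemma case3:
  assumes k2: "k \<ge> 2" and rk: "r \<le> k" and r3: "r \<ge> 3" and n: "n = r + m * (k + 1)"
  shows "[klucas k n = (-1) ^ m * 2 ^ (r - 2) *
            (4 * (binomZ (int m + int r + 1) (int m) - binomZ (int m + int r - 1) (int m - 2))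
             - (binomZ (int m + int r) (int m) - binomZ (int m + int r - 2) (int m - 2)))]
            (mod 2 ^ (k + r - 2))"
proof -
  obtain q where q: "r = q + 3" using r3 by (metis add.commute le_Suc_ex)
  have k1: "k \<ge> 1" using k2 by simp
  have A: "binomZ (int m + int r + 1) (int m) - binomZ (int m + int r - 1) (int m - 2)
      = 2 * int ((q + 3 + m) choose m) - int ((q + 2 + m) choose m)"
    using binom_id[of r m] q by simp
  have B: "binomZ (int m + int r) (int m) - binomZ (int m + int r - 2) (int m - 2)
      = 2 * int ((q + 2 + m) choose m) - int ((q + 1 + m) choose m)"
  proof -
    have h1: "int m + int (q + 2) + 1 = int m + int r" and h2: "int m + int (q + 2) - 1 = int m + int r - 2"
      using q by simp_all
    have h3: "q + 2 - 1 + m = q + 1 + m" "q + 2 + m = m + (q + 2)" by simp_all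
    show ?thesis using binom_id[of "q + 2" m, unfolded h1 h2 h3] by (simp add: add.commute)
  qed
  have L: "klucas k n = 2 * ka k n - 3 * ka k (n - 1) + ka k (n - 2)"
    using L_ka[OF k1] n r3 by simp
  have n1: "n - 1 = (q + 2) + m * (k + 1)" and n2: "n - 2 = (q + 1) + m * (k + 1)" and n0: "n = (q + 3) + m * (k + 1)"
    using n q by simp_all
  obtain t0 where t0: "ka k n - (-1) ^ m * int ((q + 3 + m) choose m) * 2 ^ (q + 3) = 2 ^ (q + 3 + k + 1) * t0"
    using keyK[OF k1, of "q + 3" m] rk q n0 by (auto elim: dvdE)
  obtain t1 where t1: "ka k (n - 1) - (-1) ^ m * int ((q + 2 + m) choose m) * 2 ^ (q + 2) = 2 ^ (q + 2 + k + 1) * t1"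
    using keyK[OF k1, of "q + 2" m] rk q n1 by (auto elim: dvdE)
  obtain t2 where t2: "ka k (n - 2) - (-1) ^ m * int ((q + 1 + m) choose m) * 2 ^ (q + 1) = 2 ^ (q + 1 + k + 1) * t2"
    using keyK[OF k1, of "q + 1" m] rk q n2 by (auto elim: dvdE)
  have e: "klucas k n - (-1) ^ m * 2 ^ (r - 2) *
            (4 * (binomZ (int m + int r + 1) (int m) - binomZ (int m + int r - 1) (int m - 2))
             - (binomZ (int m + int r) (int m) - binomZ (int m + int r - 2) (int m - 2)))
         = 2 ^ (k + r - 2) * (16 * t0 - 12 * t1 + 2 * t2)"
    unfolding A B L using t0 t1 t2 q by (simp add: algebra_simps power_add)
  show ?thesis unfolding cong_iff_dvd_diff e by simp
qed

lemma choose_Suc_self: "(Suc m choose m) = Suc m"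
  by (induction m) auto

lemma choose_SS: "2 * int (Suc (Suc m) choose m) = (int m + 1) * (int m + 2)"
proof (induction m)
  case 0 then show ?case by simp
next
  case (Suc m)
  have "Suc (Suc (Suc m)) choose Suc m = (Suc (Suc m) choose m) + (Suc (Suc m) choose Suc m)" by simp
  also have "(Suc (Suc m) choose Suc m) = Suc (Suc m)" by (rule choose_Suc_self)
  finally show ?case using Suc by (simp add: algebra_simps)
qed

lemma case2:
  assumes k2: "k \<ge> 2" and n: "n = 2 + m * (k + 1)"
  shows "[klucas k n = (4 * int m ^ 2 + 6 * int m + 3) * (-1) ^ m] (mod 2 ^ k)"
proof -
  have k1: "k \<ge> 1" using k2 by simp
  have L: "klucas k n = 2 * ka k n - 3 * ka k (n - 1) + ka k (n - 2)"
    using L_ka[OF k1] n by simp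
  have n1: "n - 1 = 1 + m * (k + 1)" and n2: "n - 2 = 0 + m * (k + 1)"
    using n by simp_all
  obtain t0 where t0: "ka k n - (-1) ^ m * int ((2 + m) choose m) * 2 ^ 2 = 2 ^ (2 + k + 1) * t0"
    using keyK[OF k1, of 2 m] k2 n by (auto elim: dvdE)
  obtain t1 where t1: "ka k (n - 1) - (-1) ^ m * int ((1 + m) choose m) * 2 ^ 1 = 2 ^ (1 + k + 1) * t1"
    using keyK[OF k1, of 1 m] k2 n1 by (auto elim: dvdE)
  obtain t2 where t2: "ka k (n - 2) - (-1) ^ m * int ((0 + m) choose m) * 2 ^ 0 = 2 ^ (0 + k + 1) * t2"
    using keyK[OF k1, of 0 m] k2 n2 by (auto elim: dvdE)
  have c2: "int ((2 + m) choose m) * 2 = (int m + 1) * (int m + 2)" using choose_SS[of m] by simp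
  have c1: "int ((1 + m) choose m) = int m + 1" using choose_Suc_self[of m] by simp
  have e: "klucas k n - (4 * int m ^ 2 + 6 * int m + 3) * (-1) ^ m = 2 ^ k * (16 * t0 - 12 * t1 + 2 * t2)"
  proof -
    have "klucas k n = 2 * ((-1) ^ m * (int ((2 + m) choose m) * 2) * 2 + 2 ^ (2 + k + 1) * t0)
        - 3 * ((-1) ^ m * int ((1 + m) choose m) * 2 ^ 1 + 2 ^ (1 + k + 1) * t1)
        + ((-1) ^ m * 1 + 2 ^ (0 + k + 1) * t2)"
      unfolding L using t0 t1 t2 by (simp add: algebra_simps)
    then show ?thesis unfolding c1 c2 by (simp add: algebra_simps power_add power2_eq_square)
  qed
  show ?thesis unfolding cong_iff_dvd_diff e by simp
qed

lemma case1:
  assumes k2: "k \<ge> 2" and n: "n = 1 + m * (k + 1)"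
  shows "[klucas k n = (4 * int m + 1) * (-1) ^ m] (mod 2 ^ (k - 1))"
proof (cases m)
  case 0 then show ?thesis using n by (simp add: klucas.simps)
next
  case (Suc m')
  have k1: "k \<ge> 1" using k2 by simp
  obtain p where kp: "k = p + 2" using k2 by (metis add.commute le_Suc_ex)
  have L: "klucas k n = 2 * ka k n - 3 * ka k (n - 1) + ka k (n - 2)"
    using L_ka[OF k1] n Suc by simp
  have n1: "n - 1 = 0 + m * (k + 1)" and n2: "n - 2 = k + m' * (k + 1)"
    using n Suc by simp_all
  obtain t0 where t0: "ka k n - (-1) ^ m * int ((1 + m) choose m) * 2 ^ 1 = 2 ^ (1 + k + 1) * t0"
    using keyK[OF k1, of 1 m] k2 n by (auto elim: dvdE)
  obtain t1 where t1: "ka k (n - 1) - (-1) ^ m * int ((0 + m) choose m) * 2 ^ 0 = 2 ^ (0 + k + 1) * t1"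
    using keyK[OF k1, of 0 m] k2 n1 by (auto elim: dvdE)
  obtain t2 where t2: "ka k (n - 2) - (-1) ^ m' * int ((k + m') choose m') * 2 ^ k = 2 ^ (k + k + 1) * t2"
    using keyK[OF k1, of k m'] k2 n2 by (auto elim: dvdE)
  have c1: "int ((1 + m) choose m) = int m + 1" using choose_Suc_self[of m] by simp
  have e: "klucas k n - (4 * int m + 1) * (-1) ^ m
      = 2 ^ (k - 1) * (16 * t0 - 12 * t1 + 2 * (-1) ^ m' * int ((k + m') choose m') + 2 ^ (k + 2) * t2)"
  proof -
    have "klucas k n = 2 * ((-1) ^ m * int ((1 + m) choose m) * 2 ^ 1 + 2 ^ (1 + k + 1) * t0)
        - 3 * ((-1) ^ m * 1 + 2 ^ (0 + k + 1) * t1)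
        + ((-1) ^ m' * int ((k + m') choose m') * 2 ^ k + 2 ^ (k + k + 1) * t2)"
      unfolding L using t0 t1 t2 by (simp add: algebra_simps)
    then show ?thesis unfolding c1 using Suc kp by (simp add: algebra_simps power_add)
  qed
  show ?thesis unfolding cong_iff_dvd_diff e by simp
qed

lemma case0:
  assumes k2: "k \<ge> 2" and n: "n = 0 + m * (k + 1)"
  shows "[klucas k n = 2 * (-1) ^ m] (mod 2 ^ (k - 2))"
proof (cases m)
  case 0 then show ?thesis using n by (simp add: klucas.simps)
next
  case (Suc m')
  have k1: "k \<ge> 1" using k2 by simp
  obtain p where kp: "k = p + 2" using k2 by (metis add.commute le_Suc_ex)
  have L: "klucas k n = 2 * ka k n - 3 * ka k (n - 1) + ka k (n - 2)"
    using L_ka[OF k1] n Suc k2 by simp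
  have n1: "n - 1 = k + m' * (k + 1)" and n2: "n - 2 = (k - 1) + m' * (k + 1)"
    using n Suc k2 by simp_all
  obtain t0 where t0: "ka k n - (-1) ^ m * int ((0 + m) choose m) * 2 ^ 0 = 2 ^ (0 + k + 1) * t0"
    using keyK[OF k1, of 0 m] k2 n by (auto elim: dvdE)
  obtain t1 where t1: "ka k (n - 1) - (-1) ^ m' * int ((k + m') choose m') * 2 ^ k = 2 ^ (k + k + 1) * t1"
    using keyK[OF k1, of k m'] k2 n1 by (auto elim: dvdE)
  obtain t2 where t2: "ka k (n - 2) - (-1) ^ m' * int ((k - 1 + m') choose m') * 2 ^ (k - 1) = 2 ^ (k - 1 + k + 1) * t2"
    using keyK[OF k1, of "k - 1" m'] k2 n2 by (auto elim: dvdE)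
  define C where "C = int ((k + m') choose m')"
  define C' where "C' = int ((k - 1 + m') choose m')"
  have e: "klucas k n - 2 * (-1) ^ m
      = 2 ^ (k - 2) * (16 * t0 - 6 * 2 ^ (p + 4) * t1 + 2 ^ (p + 4) * t2 - 12 * (-1) ^ m' * C + 2 * (-1) ^ m' * C')"
  proof -
    have "klucas k n = 2 * ((-1) ^ m * 1 + 2 ^ (0 + k + 1) * t0)
        - 3 * ((-1) ^ m' * C * 2 ^ k + 2 ^ (k + k + 1) * t1)
        + ((-1) ^ m' * C' * 2 ^ (k - 1) + 2 ^ (k - 1 + k + 1) * t2)"
      unfolding L C_def C'_def using t0 t1 t2 by (simp add: algebra_simps)
    then show ?thesis using Suc kp by (simp add: algebra_simps power_add)
  qed
  show ?thesis unfolding cong_iff_dvd_diff e by simp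
qed

theorem lemma3p1:
  fixes k m r n :: nat
  assumes "k \<ge> 2" and "r \<le> k" and "n = r + m * (k + 1)"
  shows "(r = 0 \<longrightarrow> [klucas k n = 2 * (-1) ^ m] (mod 2 ^ (k - 2)))
       \<and> (r = 1 \<longrightarrow> [klucas k n = (4 * int m + 1) * (-1) ^ m] (mod 2 ^ (k - 1)))
       \<and> (r = 2 \<longrightarrow> [klucas k n = (4 * int m ^ 2 + 6 * int m + 3) * (-1) ^ m] (mod 2 ^ k))
       \<and> (r \<ge> 3 \<longrightarrow> [klucas k n = (-1) ^ m * 2 ^ (r - 2) *
            (4 * (binomZ (int m + int r + 1) (int m) - binomZ (int m + int r - 1) (int m - 2))
             - (binomZ (int m + int r) (int m) - binomZ (int m + int r - 2) (int m - 2)))]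
            (mod 2 ^ (k + r - 2)))"
proof (intro conjI impI)
  assume "r = 0" then show "[klucas k n = 2 * (-1) ^ m] (mod 2 ^ (k - 2))"
    using case0[OF assms(1)] assms(3) by simp
next
  assume "r = 1" then show "[klucas k n = (4 * int m + 1) * (-1) ^ m] (mod 2 ^ (k - 1))"
    using case1[OF assms(1)] assms(3) by simp
next
  assume "r = 2" then show "[klucas k n = (4 * int m ^ 2 + 6 * int m + 3) * (-1) ^ m] (mod 2 ^ k)"
    using case2[OF assms(1)] assms(3) by simp
next
  assume "r \<ge> 3" then show "[klucas k n = (-1) ^ m * 2 ^ (r - 2) *
            (4 * (binomZ (int m + int r + 1) (int m) - binomZ (int m + int r - 1) (int m - 2))
             - (binomZ (int m + int r) (int m) - binomZ (int m + int r - 2) (int m - 2)))]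
            (mod 2 ^ (k + r - 2))"
    using case3[OF assms(1) assms(2) _ assms(3)] by simp
qed

end
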